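(* Let $\Gamma=(Q,A,E,(\delta_e)_{e\in E})$ be an MEMDP, $q\in Q$ a state, $W$ a parity objective, and $b\in\mathcal D(E)$ a prior belief with $\mathrm{Supp}(b)=E$. Then $\mathrm{val}^{\mathrm{uni}}_q(\Gamma,W)=1$ if and only if $\mathrm{val}^{\mathrm{pr}}_q(\Gamma,b,W)=1$. Moreover, for every strategy $\sigma\in\mathrm{Strat}(Q,A)$: $\mathrm{val}^{\mathrm{uni}}_q(\Gamma,\sigma,W)=1$ if and only if $\mathrm{val}^{\mathrm{pr}}_q(\Gamma,b,\sigma,W)=1$.
   Context: For a set $X$, a distribution on $X$ is a function $d:X\to[0,1]$ with countable support $\mathrm{Supp}(d)=\{x: d(x)>0\}$ and $\sum_x d(x)=1$; $\mathcal D(X)$ denotes the set of distributions. An MDP is $G=(Q,A,\delta)$ with $Q,A$ finite non-empty and $\delta:Q\times A\to\mathcal D(Q)$. Finite runs are elements of $Q\cdot(A\cdot Q)^*$, infinite runs elements of $(Q\cdot A)^\omega$. A strategy is a map $\sigma:Q\cdot(A\cdot Q)^*\to\mathcal D(A)$; $\mathrm{Strat}(Q,A)$ is the set of strategies. For $q\in Q$, $\mathbb P^\sigma_q[G,\cdot]$ is the unique probability measure on the Borel sets of infinite runs such that the cylinder of a finite run $q_0(a_1,q_1)\cdots(a_n,q_n)$ has probability $[q_0=q]\prod_{i=1}^n\sigma(q_0(a_1,q_1)\cdots(a_{i-1},q_{i-1}))(a_i)\,\delta(q_{i-1},a_i)(q_i)$; sets of infinite state sequences are measured via projection of runs onto their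 state sequences. A parity objective is given by a labelling $f:Q\to\mathbb N$: $W$ is the set of infinite state sequences whose maximal label occurring infinitely often is even. An MEMDP is $\Gamma=(Q,A,E,(\delta_e)_{e\in E})$ with $E$ a finite non-empty set of environments and each $\Gamma[e]:=(Q,A,\delta_e)$ an MDP. Values: $\mathrm{val}^{\mathrm{uni}}_q(\Gamma,\sigma,W)=\min_{e\in E}\mathbb P^\sigma_q[\Gamma[e],W]$, $\mathrm{val}^{\mathrm{uni}}_q(\Gamma,W)=\sup_\sigma \mathrm{val}^{\mathrm{uni}}_q(\Gamma,\sigma,W)$; for $b\in\mathcal D(E)$, $\mathrm{val}^{\mathrm{pr}}_q(\Gamma,b,\sigma,W)=\sum_{e\in E}b(e)\,\mathbb P^\sigma_q[\Gamma[e],W]$ and $\mathrm{val}^{\mathrm{pr}}_q(\Gamma,b,W)=\sup_\sigma\mathrm{val}^{\mathrm{pr}}_q(\Gamma,b,\sigma,W)$. *)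

theory Defs
  imports "HOL-Probability.Probability"
begin

text \<open>MDPs with finite state type 'q and finite action type 'a (nonempty, as all HOL types).
  A finite run q0 (a1,q1) ... (an,qn) is represented as the pair (q0, [(a1,q1),...,(an,qn)]).
  An infinite run q0 a1 q1 a2 ... in (Q.A)^omega is a stream of pairs (q_i, a_(i+1)).\<close>

type_synonym ('q, 'a) frun = "'q \<times> ('a \<times> 'q) list"
type_synonym ('q, 'a) strat = "('q, 'a) frun \<Rightarrow> 'a pmf"

definition run_states :: "('q, 'a) frun \<Rightarrow> 'q list" where
  "run_states r = fst r # map snd (snd r)"

definition cylinder :: "('q, 'a) frun \<Rightarrow> ('q \<times> 'a) stream set" where
  "cylinder r = {\<omega>. (\<forall>i < length (snd r).
        \<omega> !! i = (run_states r ! i, fst (snd r ! i)))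
     \<and> fst (\<omega> !! length (snd r)) = last (run_states r)}"

definition cyl_prob ::
  "('q \<Rightarrow> 'a \<Rightarrow> 'q pmf) \<Rightarrow> ('q, 'a) strat \<Rightarrow> 'q \<Rightarrow> ('q, 'a) frun \<Rightarrow> real" where
  "cyl_prob \<delta> \<sigma> q r =
     (if fst r = q then 1 else 0) *
     (\<Prod>i<length (snd r).
        pmf (\<sigma> (fst r, take i (snd r))) (fst (snd r ! i)) *
        pmf (\<delta> (run_states r ! i) (fst (snd r ! i))) (snd (snd r ! i)))"

definition run_measure ::
  "('q \<Rightarrow> 'a \<Rightarrow> 'q pmf) \<Rightarrow> ('q, 'a) strat \<Rightarrow> 'q \<Rightarrow> ('q \<times> 'a) stream measure" where
  "run_measure \<delta> \<sigma> q = (THE M.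
     sets M = sets (stream_space (count_space UNIV)) \<and> prob_space M \<and>
     (\<forall>r. measure M (cylinder r) = cyl_prob \<delta> \<sigma> q r))"

definition prob_obj ::
  "('q \<Rightarrow> 'a \<Rightarrow> 'q pmf) \<Rightarrow> ('q, 'a) strat \<Rightarrow> 'q \<Rightarrow> 'q stream set \<Rightarrow> real" where
  "prob_obj \<delta> \<sigma> q W =
     measure (run_measure \<delta> \<sigma> q) {\<omega> \<in> space (run_measure \<delta> \<sigma> q). smap fst \<omega> \<in> W}"

definition parity :: "('q::finite \<Rightarrow> nat) \<Rightarrow> 'q stream set" where
  "parity f = {s. even (Max {n. \<exists>\<^sub>\<infinity> i. f (s !! i) = n})}"

text \<open>MEMDP: environments form a finite type 'e, delta :: 'e => 'q => 'a => 'q pmf.\<close>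
definition val_uni_strat ::
  "('e::finite \<Rightarrow> 'q \<Rightarrow> 'a \<Rightarrow> 'q pmf) \<Rightarrow> 'q \<Rightarrow> ('q, 'a) strat \<Rightarrow> 'q stream set \<Rightarrow> real" where
  "val_uni_strat \<delta> q \<sigma> W = Min (range (\<lambda>e. prob_obj (\<delta> e) \<sigma> q W))"

definition val_uni ::
  "('e::finite \<Rightarrow> 'q \<Rightarrow> 'a \<Rightarrow> 'q pmf) \<Rightarrow> 'q \<Rightarrow> 'q stream set \<Rightarrow> real" where
  "val_uni \<delta> q W = (SUP \<sigma>. val_uni_strat \<delta> q \<sigma> W)"

definition val_pr_strat ::
  "('e::finite \<Rightarrow> 'q \<Rightarrow> 'a \<Rightarrow> 'q pmf) \<Rightarrow> 'q \<Rightarrow> 'e pmf \<Rightarrow> ('q, 'a) strat \<Rightarrow> 'q stream set \<Rightarrow> real" where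
  "val_pr_strat \<delta> q b \<sigma> W = (\<Sum>e\<in>UNIV. pmf b e * prob_obj (\<delta> e) \<sigma> q W)"

definition val_pr ::
  "('e::finite \<Rightarrow> 'q \<Rightarrow> 'a \<Rightarrow> 'q pmf) \<Rightarrow> 'q \<Rightarrow> 'e pmf \<Rightarrow> 'q stream set \<Rightarrow> real" where
  "val_pr \<delta> q b W = (SUP \<sigma>. val_pr_strat \<delta> q b \<sigma> W)"

end

theory Submission
  imports Defs
begin

definition nxt :: "(('q,'a) frun \<Rightarrow> 'a \<times> 'q) \<Rightarrow> ('q,'a) frun \<Rightarrow> ('q,'a) frun" where
  "nxt \<omega> h = (fst h, snd h @ [\<omega> h])"

definition hist :: "(('q,'a) frun \<Rightarrow> 'a \<times> 'q) \<Rightarrow> 'q \<Rightarrow> nat \<Rightarrow> ('q,'a) frun" where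
  "hist \<omega> q n = (nxt \<omega> ^^ n) (q, [])"

definition runX :: "'q \<Rightarrow> (('q,'a) frun \<Rightarrow> 'a \<times> 'q) \<Rightarrow> ('q \<times> 'a) stream" where
  "runX q \<omega> = smap (\<lambda>h. (last (run_states h), fst (\<omega> h))) (siterate (nxt \<omega>) (q, []))"

lemma hist_Suc: "hist \<omega> q (Suc n) = nxt \<omega> (hist \<omega> q n)"
  by (simp add: hist_def)

lemma hist_0: "hist \<omega> q 0 = (q, [])"
  by (simp add: hist_def)

lemma runX_snth: "runX q \<omega> !! n = (last (run_states (hist \<omega> q n)), fst (\<omega> (hist \<omega> q n)))"
  by (simp add: runX_def hist_def snth_siterate)

lemma hist_char:
  "hist \<omega> q n = (q', xs) \<longleftrightarrow> q' = q \<and> length xs = n \<and> (\<forall>i<n. \<omega> (q, take i xs) = xs ! i)"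
proof (induction n arbitrary: xs)
  case 0
  then show ?case by (auto simp: hist_0)
next
  case (Suc n)
  show ?case
  proof (cases xs rule: rev_cases)
    case Nil
    then show ?thesis by (simp add: hist_Suc nxt_def prod_eq_iff)
  next
    case (snoc ys y)
    have "hist \<omega> q (Suc n) = (q', xs) \<longleftrightarrow> hist \<omega> q n = (q', ys) \<and> \<omega> (q', ys) = y"
      by (cases "hist \<omega> q n") (auto simp: hist_Suc nxt_def snoc)
    also have "\<dots> \<longleftrightarrow> q' = q \<and> length ys = n \<and> (\<forall>i<n. \<omega> (q, take i ys) = ys ! i) \<and> \<omega> (q, ys) = y"
      using Suc.IH by auto
    also have "\<dots> \<longleftrightarrow> q' = q \<and> length xs = Suc n \<and> (\<forall>i<Suc n. \<omega> (q, take i xs) = xs ! i)"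
      by (auto simp: snoc less_Suc_eq nth_append)
    finally show ?thesis .
  qed
qed

lemma last_run_states_take:
  assumes "i \<le> length xs"
  shows "last (run_states (q, take i xs)) = run_states (q, xs) ! i"
  using assms
  by (cases i) (auto simp: run_states_def last_map take_Suc_conv_app_nth last_conv_nth)

lemma run_in_cyl:
  assumes "fst r = q" "\<forall>i<length (snd r). \<omega> (q, take i (snd r)) = snd r ! i"
  shows "runX q \<omega> \<in> cylinder r"
proof -
  obtain xs where r: "r = (q, xs)" using assms(1) by (cases r) auto
  have h: "hist \<omega> q i = (q, take i xs)" if "i \<le> length xs" for i
    using that assms(2) by (subst hist_char) (auto simp: r)
  show ?thesis
    unfolding cylinder_def using assms(2)
    by (auto simp: runX_snth h r last_run_states_take run_states_def[of "(q, xs)"] last_conv_nth)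
qed

lemma cyl_fst:
  assumes "s \<in> cylinder r" "i \<le> length (snd r)"
  shows "fst (s !! i) = run_states r ! i"
proof (cases "i < length (snd r)")
  case True then show ?thesis using assms by (auto simp: cylinder_def)
next
  case False
  then have "i = length (snd r)" using assms by auto
  then show ?thesis using assms
    by (auto simp: cylinder_def last_conv_nth run_states_def)
qed

lemma cyl_snd:
  assumes "s \<in> cylinder r" "i < length (snd r)"
  shows "snd (s !! i) = fst (snd r ! i)"
  using assms by (auto simp: cylinder_def)

lemma cyl_unique:
  assumes "s \<in> cylinder r" "s \<in> cylinder r'" "length (snd r) = length (snd r')"
  shows "r = r'"
proof -
  have "fst r = fst r'"
    using cyl_fst[OF assms(1), of 0] cyl_fst[OF assms(2), of 0]
    by (simp add: run_states_def)
  moreover have "snd r ! i = snd r' ! i" if "i < length (snd r)" for i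
  proof -
    have "fst (snd r ! i) = fst (snd r' ! i)"
      using cyl_snd[OF assms(1) that] cyl_snd[OF assms(2), of i] that assms(3) by simp
    moreover have "run_states r ! Suc i = run_states r' ! Suc i"
      using cyl_fst[OF assms(1), of "Suc i"] cyl_fst[OF assms(2), of "Suc i"] that assms(3)
      by simp
    then have "snd (snd r ! i) = snd (snd r' ! i)"
      using that assms(3) by (simp add: run_states_def)
    ultimately show ?thesis by (simp add: prod_eq_iff)
  qed
  moreover have "snd r = snd r'"
    by (rule nth_equalityI) (use assms(3) calculation(2) in auto)
  ultimately show ?thesis by (simp add: prod_eq_iff)
qed

lemma runX_vimage_cyl:
  "runX q \<omega> \<in> cylinder r \<longleftrightarrow> fst r = q \<and> (\<forall>i<length (snd r). \<omega> (q, take i (snd r)) = snd r ! i)"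
proof
  assume a: "runX q \<omega> \<in> cylinder r"
  obtain q' xs where h: "hist \<omega> q (length (snd r)) = (q', xs)" by fastforce
  then have c: "q' = q \<and> length xs = length (snd r) \<and> (\<forall>i<length (snd r). \<omega> (q, take i xs) = xs ! i)"
    by (simp only: hist_char) simp
  have "runX q \<omega> \<in> cylinder (q, xs)"
    by (rule run_in_cyl) (use c in simp_all)
  then have "r = (q, xs)" using cyl_unique[OF a, of "(q, xs)"] c by simp
  then show "fst r = q \<and> (\<forall>i<length (snd r). \<omega> (q, take i (snd r)) = snd r ! i)"
    using c by simp
next
  assume "fst r = q \<and> (\<forall>i<length (snd r). \<omega> (q, take i (snd r)) = snd r ! i)"
  then show "runX q \<omega> \<in> cylinder r" by (elim conjE) (rule run_in_cyl)
qed

definition K :: "('q \<Rightarrow> 'a \<Rightarrow> 'q pmf) \<Rightarrow> ('q, 'a) strat \<Rightarrow> ('q,'a) frun \<Rightarrow> ('a \<times> 'q) pmf" where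
  "K \<delta> \<sigma> h = bind_pmf (\<sigma> h) (\<lambda>a. map_pmf (Pair a) (\<delta> (last (run_states h)) a))"

lemma pmf_K: "pmf (K \<delta> \<sigma> h) (a, q') = pmf (\<sigma> h) a * pmf (\<delta> (last (run_states h)) a) q'"
proof -
  define D where "D = (\<lambda>a. \<delta> (last (run_states h)) a)"
  have "pmf (K \<delta> \<sigma> h) (a, q') = (\<integral>x. pmf (map_pmf (Pair x) (D x)) (a, q') \<partial>measure_pmf (\<sigma> h))"
    unfolding K_def D_def by (rule pmf_bind)
  also have "\<dots> = (\<integral>x. indicator {a} x * pmf (D a) q' \<partial>measure_pmf (\<sigma> h))"
  proof (rule Bochner_Integration.integral_cong[OF refl])
    fix x
    show "pmf (map_pmf (Pair x) (D x)) (a, q') = indicator {a} x * pmf (D a) q'"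
    proof (cases "x = a")
      case True
      have inj: "inj (Pair a)" by (rule injI) simp
      show ?thesis using pmf_map_inj'[OF inj, of "D a" q'] True by simp
    next
      case False
      then have "(a, q') \<notin> set_pmf (map_pmf (Pair x) (D x))" by (simp add: set_map_pmf image_iff)
      then show ?thesis using False by (simp add: pmf_eq_0_set_pmf)
    qed
  qed
  also have "\<dots> = measure (measure_pmf (\<sigma> h)) {a} * pmf (D a) q'"
    by (rule integral_mult_left_zero[THEN trans]) simp
  also have "\<dots> = pmf (\<sigma> h) a * pmf (D a) q'"
    by (simp only: measure_pmf_single)
  finally show ?thesis by (simp add: D_def)
qed

definition NM :: "('q::finite \<Rightarrow> 'a::finite \<Rightarrow> 'q pmf) \<Rightarrow> ('q, 'a) strat \<Rightarrow> (('q,'a) frun \<Rightarrow> 'a \<times> 'q) measure" where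
  "NM \<delta> \<sigma> = PiM UNIV (\<lambda>h. measure_pmf (K \<delta> \<sigma> h))"

definition RM :: "('q::finite \<Rightarrow> 'a::finite \<Rightarrow> 'q pmf) \<Rightarrow> ('q, 'a) strat \<Rightarrow> 'q \<Rightarrow> ('q \<times> 'a) stream measure" where
  "RM \<delta> \<sigma> q = distr (NM \<delta> \<sigma>) (stream_space (count_space UNIV)) (runX q)"

lemma meas_coord: "(\<lambda>\<omega>. \<omega> h) \<in> measurable (NM \<delta> \<sigma>) (count_space UNIV)"
  unfolding NM_def
  using measurable_component_singleton[of h UNIV "\<lambda>h. measure_pmf (K \<delta> \<sigma> h)"]
  by (simp add: measurable_cong_sets[OF refl sets_measure_pmf_count_space])

lemma meas_hist: "(\<lambda>\<omega>. hist \<omega> q n) \<in> measurable (NM \<delta> \<sigma>) (count_space UNIV)"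
proof (induction n)
  case 0 then show ?case by (simp add: hist_0)
next
  case (Suc n)
  have "(\<lambda>\<omega>. nxt \<omega> (hist \<omega> q n)) \<in> measurable (NM \<delta> \<sigma>) (count_space UNIV)"
  proof (rule measurable_compose_countable'[where I=UNIV, OF _ Suc.IH])
    fix h :: "('a, 'b) frun"
    show "(\<lambda>\<omega>. nxt \<omega> h) \<in> measurable (NM \<delta> \<sigma>) (count_space UNIV)"
      unfolding nxt_def
      by (rule measurable_compose[OF meas_coord]) simp
  qed simp
  then show ?case by (simp add: hist_Suc)
qed

lemma meas_runX: "runX q \<in> measurable (NM \<delta> \<sigma>) (stream_space (count_space UNIV))"
proof (rule measurable_stream_space2)
  fix n
  have "(\<lambda>\<omega>. (\<lambda>h \<omega>. (last (run_states h), fst (\<omega> h))) (hist \<omega> q n) \<omega>) \<in> measurable (NM \<delta> \<sigma>) (count_space UNIV)"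
  proof (rule measurable_compose_countable'[where I=UNIV, OF _ meas_hist])
    fix h :: "('a, 'b) frun"
    show "(\<lambda>\<omega>. (last (run_states h), fst (\<omega> h))) \<in> measurable (NM \<delta> \<sigma>) (count_space UNIV)"
      by (rule measurable_compose[OF meas_coord]) simp
  qed simp
  then show "(\<lambda>\<omega>. runX q \<omega> !! n) \<in> measurable (NM \<delta> \<sigma>) (count_space UNIV)"
    by (simp add: runX_snth)
qed

lemma sets_cyl: "cylinder (r :: ('q::countable, 'a::countable) frun) \<in> sets (stream_space (count_space UNIV))"
proof -
  define n where "n = length (snd r)"
  define T where "T = {l :: ('q \<times> 'a) list. (\<forall>i < n. l ! i = (run_states r ! i, fst (snd r ! i)))
     \<and> fst (l ! n) = last (run_states r)}"
  have "cylinder r = stake (Suc n) -` T \<inter> space (stream_space (count_space UNIV))"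
    using stake_nth[of _ "Suc n"]
    by (auto simp: cylinder_def space_stream_space T_def n_def[symmetric] simp del: stake.simps)
  also have "\<dots> \<in> sets (stream_space (count_space UNIV))"
    by (rule measurable_sets[OF measurable_stake]) simp
  finally show ?thesis .
qed

lemma NM_prob: "prob_space (NM \<delta> \<sigma>)"
proof -
  interpret P: product_prob_space "\<lambda>h. measure_pmf (K \<delta> \<sigma> h)" UNIV by standard
  show ?thesis unfolding NM_def by (rule P.prob_space_axioms)
qed

lemma RM_prob: "prob_space (RM \<delta> \<sigma> q)"
  unfolding RM_def
  by (rule prob_space.prob_space_distr[OF NM_prob meas_runX])

lemma sets_RM: "sets (RM \<delta> \<sigma> q) = sets (stream_space (count_space UNIV))"
  by (simp add: RM_def)

lemma RM_cyl: "measure (RM \<delta> \<sigma> q) (cylinder r) = cyl_prob \<delta> \<sigma> q r"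
proof -
  interpret P: product_prob_space "\<lambda>h. measure_pmf (K \<delta> \<sigma> h)" UNIV by standard
  obtain q0 xs where r: "r = (q0, xs)" by fastforce
  define n where "n = length xs"
  have m: "measure (RM \<delta> \<sigma> q) (cylinder r) = measure (NM \<delta> \<sigma>) (runX q -` cylinder r \<inter> space (NM \<delta> \<sigma>))"
    unfolding RM_def by (rule measure_distr[OF meas_runX sets_cyl])
  show ?thesis
  proof (cases "q0 = q")
    case False
    then have "runX q -` cylinder r = {}" using runX_vimage_cyl[of q _ r] r by auto
    then show ?thesis using m False by (simp add: cyl_prob_def r)
  next
    case True
    define h where "h = (\<lambda>i. (q, take i xs))"
    define J where "J = h ` {..<n}"
    define X where "X = (\<lambda>j :: ('a,'b) frun. {xs ! length (snd j)})"
    have lh: "length (snd (h i)) = i" if "i < n" for i using that by (simp add: h_def n_def)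
    have inj: "inj_on h {..<n}"
      by (rule inj_onI) (metis lh lessThan_iff)
    have eq: "runX q -` cylinder r \<inter> space (NM \<delta> \<sigma>) = prod_emb UNIV (\<lambda>h. measure_pmf (K \<delta> \<sigma> h)) J (Pi\<^sub>E J X)"
      by (auto simp: runX_vimage_cyl r True prod_emb_def NM_def space_PiM J_def X_def h_def n_def PiE_iff)
    have "emeasure (NM \<delta> \<sigma>) (runX q -` cylinder r \<inter> space (NM \<delta> \<sigma>)) =
        (\<Prod>j\<in>J. emeasure (measure_pmf (K \<delta> \<sigma> j)) (X j))"
      by (subst eq, unfold NM_def, rule P.emeasure_PiM_emb) (auto simp: J_def)
    also have "\<dots> = (\<Prod>i<n. ennreal (pmf (K \<delta> \<sigma> (h i)) (xs ! i)))"
      unfolding J_def by (subst prod.reindex[OF inj]) (simp add: X_def lh emeasure_pmf_single)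
    also have "\<dots> = ennreal (\<Prod>i<n. pmf (K \<delta> \<sigma> (h i)) (xs ! i))"
      by (simp add: prod_ennreal)
    finally have e: "measure (NM \<delta> \<sigma>) (runX q -` cylinder r \<inter> space (NM \<delta> \<sigma>)) = (\<Prod>i<n. pmf (K \<delta> \<sigma> (h i)) (xs ! i))"
      by (simp add: measure_def prod_nonneg)
    have "pmf (K \<delta> \<sigma> (h i)) (xs ! i) =
        pmf (\<sigma> (q, take i xs)) (fst (xs ! i)) * pmf (\<delta> (run_states r ! i) (fst (xs ! i))) (snd (xs ! i))"
      if "i < n" for i
    proof -
      have "pmf (K \<delta> \<sigma> (h i)) (xs ! i) = pmf (K \<delta> \<sigma> (h i)) (fst (xs ! i), snd (xs ! i))" by simp
      also have "\<dots> = pmf (\<sigma> (h i)) (fst (xs ! i)) * pmf (\<delta> (last (run_states (h i))) (fst (xs ! i))) (snd (xs ! i))"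
        by (rule pmf_K)
      finally show ?thesis using that
        by (simp add: h_def last_run_states_take n_def r True)
    qed
    then show ?thesis using m e by (simp add: cyl_prob_def r True n_def)
  qed
qed

definition Rx :: "('q \<times> 'a) list \<Rightarrow> 'q \<Rightarrow> ('q, 'a) frun" where
  "Rx xs q' = (fst (xs ! 0), map (\<lambda>i. (snd (xs ! i), if Suc i < length xs then fst (xs ! Suc i) else q')) [0..<length xs])"

lemma run_states_Rx:
  assumes "xs \<noteq> []" "i \<le> length xs"
  shows "run_states (Rx xs q') ! i = (if i < length xs then fst (xs ! i) else q')"
proof (cases i)
  case 0 then show ?thesis using assms by (simp add: Rx_def run_states_def)
next
  case (Suc j)
  then show ?thesis using assms by (simp add: Rx_def run_states_def)
qed

lemma cyl_Rx:
  assumes "xs \<noteq> []"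
  shows "s \<in> cylinder (Rx xs q') \<longleftrightarrow> (\<forall>i<length xs. s !! i = xs ! i) \<and> fst (s !! length xs) = q'"
proof -
  have len: "length (snd (Rx xs q')) = length xs" by (simp add: Rx_def)
  have l: "last (run_states (Rx xs q')) = q'"
  proof -
    have "last (run_states (Rx xs q')) = run_states (Rx xs q') ! length xs"
      by (simp add: last_conv_nth run_states_def len[unfolded run_states_def] Rx_def)
    also have "\<dots> = q'" using run_states_Rx[OF assms, of "length xs"] by simp
    finally show ?thesis .
  qed
  have e: "(run_states (Rx xs q') ! i, fst (snd (Rx xs q') ! i)) = xs ! i" if "i < length xs" for i
    using that run_states_Rx[OF assms, of i] by (simp add: Rx_def prod_eq_iff)
  show ?thesis
    unfolding cylinder_def using e by (simp add: len l)
qed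

lemma meas_unique:
  fixes M N :: "('q::finite \<times> 'a::finite) stream measure"
  assumes PM: "prob_space M" and PN: "prob_space N"
    and sM: "sets M = sets (stream_space (count_space UNIV))"
    and sN: "sets N = sets (stream_space (count_space UNIV))"
    and c: "\<And>r. measure M (cylinder r) = measure N (cylinder r)"
  shows "M = N"
proof (rule stream_space_eq_sstart[where S=UNIV, OF _ PM PN _ _ sM sN])
  fix xs :: "('q \<times> 'a) list" assume xs: "xs \<noteq> []"
  interpret PM: prob_space M by (rule PM)
  interpret PN: prob_space N by (rule PN)
  have U: "sstart UNIV xs = (\<Union>q'\<in>UNIV. cylinder (Rx xs q'))"
    by (auto simp: cyl_Rx[OF xs] sstart_eq)
  have d: "disjoint_family_on (\<lambda>q'. cylinder (Rx xs q')) UNIV"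
    by (auto simp: disjoint_family_on_def cyl_Rx[OF xs])
  have sc: "cylinder (Rx xs q') \<in> sets (stream_space (count_space UNIV))" for q'
    by (rule sets_cyl)
  have "measure M (sstart UNIV xs) = measure N (sstart UNIV xs)"
  proof -
    have "measure M (sstart UNIV xs) = (\<Sum>q'\<in>UNIV. measure M (cylinder (Rx xs q')))"
      unfolding U using d sc sM
      by (intro PM.finite_measure_finite_Union) auto
    also have "\<dots> = (\<Sum>q'\<in>UNIV. measure N (cylinder (Rx xs q')))"
      by (simp add: c)
    also have "\<dots> = measure N (sstart UNIV xs)"
      unfolding U using d sc sN
      by (intro PN.finite_measure_finite_Union[symmetric]) auto
    finally show ?thesis .
  qed
  then show "emeasure M (sstart UNIV xs) = emeasure N (sstart UNIV xs)"
    by (simp add: PM.emeasure_eq_measure PN.emeasure_eq_measure)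
qed auto

lemma run_measure_eq: "run_measure \<delta> \<sigma> q = RM \<delta> \<sigma> q"
  unfolding run_measure_def
proof (rule the_equality)
  show "sets (RM \<delta> \<sigma> q) = sets (stream_space (count_space UNIV)) \<and> prob_space (RM \<delta> \<sigma> q) \<and>
    (\<forall>r. measure (RM \<delta> \<sigma> q) (cylinder r) = cyl_prob \<delta> \<sigma> q r)"
    using sets_RM RM_prob RM_cyl by blast
next
  fix M assume "sets M = sets (stream_space (count_space UNIV)) \<and> prob_space M \<and>
    (\<forall>r. measure M (cylinder r) = cyl_prob \<delta> \<sigma> q r)"
  then have h: "sets M = sets (stream_space (count_space UNIV))" "prob_space M"
    "\<And>r. measure M (cylinder r) = cyl_prob \<delta> \<sigma> q r" by auto
  show "M = RM \<delta> \<sigma> q"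
    by (rule meas_unique[OF h(2) RM_prob h(1) sets_RM]) (simp add: h(3) RM_cyl)
qed

lemma prob_obj_bounds:
  fixes \<delta> :: "'q::finite \<Rightarrow> 'a::finite \<Rightarrow> 'q pmf"
  shows "0 \<le> prob_obj \<delta> \<sigma> q W \<and> prob_obj \<delta> \<sigma> q W \<le> 1"
proof -
  interpret prob_space "run_measure \<delta> \<sigma> q" by (subst run_measure_eq) (rule RM_prob)
  show ?thesis unfolding prob_obj_def by simp
qed

lemma abstract_vals:
  fixes P :: "'e::finite \<Rightarrow> 's \<Rightarrow> real" and w :: "'e \<Rightarrow> real"
  assumes P01: "\<And>e s. 0 \<le> P e s \<and> P e s \<le> 1" and wpos: "\<And>e. w e > 0" and w1: "sum w UNIV = 1"
  defines "vu \<equiv> \<lambda>s. Min (range (\<lambda>e. P e s))" and "vp \<equiv> \<lambda>s. \<Sum>e\<in>UNIV. w e * P e s"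
  shows "((SUP s. vu s) = 1 \<longleftrightarrow> (SUP s. vp s) = 1) \<and> (\<forall>s. vu s = 1 \<longleftrightarrow> vp s = 1)"
proof -
  define c where "c = Min (range w)"
  have cpos: "c > 0" unfolding c_def using wpos by (subst Min_gr_iff) auto
  have cle: "c \<le> w e" for e unfolding c_def by (rule Min_le) auto
  have vu_le: "vu s \<le> P e s" for s e unfolding vu_def by (rule Min_le) auto
  have vu_in: "\<exists>e. vu s = P e s" for s
  proof -
    have "Min (range (\<lambda>e. P e s)) \<in> range (\<lambda>e. P e s)" by (rule Min_in) auto
    then show ?thesis unfolding vu_def by (metis imageE)
  qed
  have vu01: "0 \<le> vu s \<and> vu s \<le> 1" for s
    using vu_in[of s] P01 by metis
  have vp_le: "vp s \<le> 1" for s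
  proof -
    have "vp s \<le> (\<Sum>e\<in>UNIV. w e * 1)"
      unfolding vp_def by (rule sum_mono) (use P01 wpos in \<open>auto intro: mult_left_le less_imp_le\<close>)
    then show ?thesis using w1 by simp
  qed
  have vu_vp: "vu s \<le> vp s" for s
  proof -
    have "vu s = (\<Sum>e\<in>UNIV. w e * vu s)" using w1 by (simp add: sum_distrib_right[symmetric])
    also have "\<dots> \<le> vp s"
      unfolding vp_def by (rule sum_mono) (use vu_le wpos in \<open>auto intro: mult_left_mono less_imp_le\<close>)
    finally show ?thesis .
  qed
  have key: "c * (1 - vu s) \<le> 1 - vp s" for s
  proof -
    obtain e where e: "vu s = P e s" using vu_in by blast
    have "1 - vp s = (\<Sum>e\<in>UNIV. w e * (1 - P e s))"
      using w1 by (simp add: vp_def right_diff_distrib sum_subtractf)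
    also have "\<dots> \<ge> w e * (1 - P e s)"
    proof (rule member_le_sum)
      fix x
      show "0 \<le> w x * (1 - P x s)" using P01[of x s] wpos[of x] by simp
    qed auto
    finally have "w e * (1 - P e s) \<le> 1 - vp s" .
    moreover have "c * (1 - P e s) \<le> w e * (1 - P e s)"
      using cle P01[of e s] by (intro mult_right_mono) auto
    ultimately show ?thesis using e by simp
  qed
  have part2: "\<forall>s. vu s = 1 \<longleftrightarrow> vp s = 1"
  proof (intro allI iffI)
    fix s assume "vu s = 1" then show "vp s = 1" using vu_vp[of s] vp_le[of s] by simp
  next
    fix s assume "vp s = 1"
    then have "c * (1 - vu s) \<le> 0" using key[of s] by simp
    then have "1 - vu s \<le> 0" using cpos by (simp add: mult_le_0_iff)
    then show "vu s = 1" using vu01[of s] by simp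
  qed
  have bu: "bdd_above (range vu)" using vu01 by (intro bdd_aboveI[of _ 1]) auto
  have bp: "bdd_above (range vp)" using vp_le by (intro bdd_aboveI[of _ 1]) auto
  have su: "(SUP s. vu s) \<le> 1" using vu01 by (intro cSUP_least) auto
  have sp: "(SUP s. vp s) \<le> 1" using vp_le by (intro cSUP_least) auto
  have part1: "(SUP s. vu s) = 1 \<longleftrightarrow> (SUP s. vp s) = 1"
  proof
    assume h: "(SUP s. vu s) = 1"
    have "(SUP s. vu s) \<le> (SUP s. vp s)" using bp vu_vp by (intro cSUP_mono) auto
    then show "(SUP s. vp s) = 1" using h sp by simp
  next
    assume h: "(SUP s. vp s) = 1"
    show "(SUP s. vu s) = 1"
    proof (rule ccontr)
      assume "(SUP s. vu s) \<noteq> 1"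
      then have d: "(SUP s. vu s) < 1" using su by simp
      define d where "d = 1 - (SUP s. vu s)"
      have dpos: "d > 0" using d by (simp add: d_def)
      have "vp s \<le> 1 - c * d" for s
      proof -
        have "vu s \<le> (SUP s. vu s)" using bu by (intro cSUP_upper) auto
        then have "d \<le> 1 - vu s" by (simp add: d_def)
        then have "c * d \<le> c * (1 - vu s)" using cpos by (intro mult_left_mono) auto
        then show ?thesis using key[of s] by simp
      qed
      then have "(SUP s. vp s) \<le> 1 - c * d" by (intro cSUP_least) auto
      moreover have "c * d > 0" using cpos dpos by simp
      ultimately show False using h by simp
    qed
  qed
  show ?thesis using part1 part2 by blast
qed

theorem mainTheorem1:
  fixes \<delta> :: "'e::finite \<Rightarrow> 'q::finite \<Rightarrow> 'a::finite \<Rightarrow> 'q pmf"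
    and q :: 'q and f :: "'q \<Rightarrow> nat" and b :: "'e pmf"
  assumes "set_pmf b = UNIV"
  shows "(val_uni \<delta> q (parity f) = 1 \<longleftrightarrow> val_pr \<delta> q b (parity f) = 1)
       \<and> (\<forall>\<sigma> :: ('q, 'a) strat.
            val_uni_strat \<delta> q \<sigma> (parity f) = 1 \<longleftrightarrow> val_pr_strat \<delta> q b \<sigma> (parity f) = 1)"
proof -
  have wpos: "pmf b e > 0" for e
    using assms pmf_nonneg[of b e] set_pmf_iff[of e b] by (metis UNIV_I less_eq_real_def)
  have w1: "sum (pmf b) UNIV = 1" by (rule sum_pmf_eq_1) auto
  have P01: "0 \<le> prob_obj (\<delta> e) \<sigma> q (parity f) \<and> prob_obj (\<delta> e) \<sigma> q (parity f) \<le> 1"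
    for e and \<sigma> :: "('q, 'a) strat"
    by (rule prob_obj_bounds)
  show ?thesis
    using abstract_vals[of "\<lambda>e \<sigma>. prob_obj (\<delta> e) \<sigma> q (parity f)" "pmf b", OF P01 wpos w1]
    unfolding val_uni_def val_pr_def val_uni_strat_def val_pr_strat_def
    by simp
qed

end
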